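(* Let $N\ge2$, $T>0$, and consider the problem of minimizing $\mathbb V(T)=\frac1N\sum_{i=1}^N\xi_i(T)^2$ over $\alpha\in\mathcal U_{FS}$, where $\dot\xi_i=-\xi_i+(1-\alpha_i)\bar\xi$, $\bar\xi=\frac1N\sum_j\xi_j$, with initial datum satisfying $\bar\xi(0)>0$ and $\xi_1(0)\ge\dots\ge\xi_N(0)$. The control which at each time $t$ splits the total strength $1$ evenly among the agents $i$ with $\xi_i(t)=\max_j\xi_j(t)$ (and sets $\alpha_i(t)=0$ for the others) is optimal for this problem. Explicitly: let $\bar\xi_{1,l}=\frac1l\sum_{i=1}^l\xi_i$, $t_1=0$ and, for $l\in\{2,\dots,N\}$, $$t_l=\frac{N}{N-1}\ln\Big((l-1)\frac{N-1}{N}\,\frac{\bar\xi_{1,l-1}(0)-\xi_l(0)}{\bar\xi(0)}+1\Big).$$ If $T\in[t_l,t_{l+1})$ for some $l\in\{1,\dots,N-1\}$, then any control in $\mathcal U_{FS}$ satisfying $\xi_i(T)=\bar\xi_{1,l}(T)$ for every $i\le l$, $\sum_{i=1}^l\alpha_i\equiv1$ and $\alpha_i\equiv0$ for every $i\ge l+1$ is optimal. If $T\ge t_N$, then any control in $\mathcal U_{FS}$ with $\xi_i(T)=\bar\xi(T)$ for all $i$ (and $\sum_i\alpha_i\equiv1$) is optimal. For instance, if $T\in[t_l,t_{l+1})$, the piecewise constant control defined for $k\le l$ and $t\in[t_k,t_{k+1})$ by $\alpha_i(t)=1/k$ for $i\le k$ and $\alpha_i(t)=0$ for $i>k$ is 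optimal.
   Context: $\mathcal U_{FS}$ is the set of measurable $\alpha:[0,T]\to[0,1]^N$ with $\sum_{i=1}^N\alpha_i(t)=1$ for all $t\in[0,T]$ ("full-strength" controls). The $\xi_i$ are projected velocities in a collective migration model with target velocity $0$. *)

theory Defs
  imports "HOL-Analysis.Analysis"
begin

text \<open>Agents are indexed by 1..N. A state is a function nat => real (only indices 1..N matter).
  A control alpha and a trajectory xi are functions of time t and agent index i.\<close>

definition full_strength :: "nat \<Rightarrow> real \<Rightarrow> (real \<Rightarrow> nat \<Rightarrow> real) \<Rightarrow> bool" where
  "full_strength N T \<alpha> \<longleftrightarrow>
     (\<forall>i\<in>{1..N}. (\<lambda>t. \<alpha> t i) \<in> borel_measurable (restrict_space lborel {0..T})) \<and>
     (\<forall>t\<in>{0..T}. (\<forall>i\<in>{1..N}. 0 \<le> \<alpha> t i \<and> \<alpha> t i \<le> 1) \<and> (\<Sum>i=1..N. \<alpha> t i) = 1)"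

definition pmean :: "nat \<Rightarrow> (nat \<Rightarrow> real) \<Rightarrow> real" where
  "pmean l x = (\<Sum>i=1..l. x i) / real l"

text \<open>Solution (in the Caratheodory / integral sense) on [0,T] of
  xi_i' = - xi_i + (1 - alpha_i) xibar, xibar = (1/N) sum_j xi_j.\<close>
definition solves :: "nat \<Rightarrow> real \<Rightarrow> (real \<Rightarrow> nat \<Rightarrow> real) \<Rightarrow> (real \<Rightarrow> nat \<Rightarrow> real) \<Rightarrow> bool" where
  "solves N T \<alpha> \<xi> \<longleftrightarrow>
     (\<forall>t\<in>{0..T}. \<forall>i\<in>{1..N}.
        ((\<lambda>s. - \<xi> s i + (1 - \<alpha> s i) * pmean N (\<xi> s)) has_integral (\<xi> t i - \<xi> 0 i)) {0..t})"

definition Vfun :: "nat \<Rightarrow> (nat \<Rightarrow> real) \<Rightarrow> real" where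
  "Vfun N x = (\<Sum>i=1..N. (x i)^2) / real N"

definition optimal :: "nat \<Rightarrow> real \<Rightarrow> (nat \<Rightarrow> real) \<Rightarrow> (real \<Rightarrow> nat \<Rightarrow> real) \<Rightarrow> (real \<Rightarrow> nat \<Rightarrow> real) \<Rightarrow> bool" where
  "optimal N T \<xi>0 \<alpha> \<xi> \<longleftrightarrow>
     full_strength N T \<alpha> \<and> solves N T \<alpha> \<xi> \<and> (\<forall>i\<in>{1..N}. \<xi> 0 i = \<xi>0 i) \<and>
     (\<forall>\<alpha>' \<xi>'. full_strength N T \<alpha>' \<and> solves N T \<alpha>' \<xi>' \<and> (\<forall>i\<in>{1..N}. \<xi>' 0 i = \<xi>0 i)
        \<longrightarrow> Vfun N (\<xi> T) \<le> Vfun N (\<xi>' T))"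

definition tsw :: "nat \<Rightarrow> (nat \<Rightarrow> real) \<Rightarrow> nat \<Rightarrow> real" where
  "tsw N \<xi>0 l = (if l \<le> 1 then 0 else
     real N / (real N - 1) * ln (real (l - 1) * ((real N - 1) / real N)
        * ((pmean (l - 1) \<xi>0 - \<xi>0 l) / pmean N \<xi>0) + 1))"

definition greedy :: "nat \<Rightarrow> (nat \<Rightarrow> real) \<Rightarrow> real \<Rightarrow> nat \<Rightarrow> real" where
  "greedy N \<xi>0 t i = (let k = Max {l\<in>{1..N}. tsw N \<xi>0 l \<le> t} in
      if 1 \<le> i \<and> i \<le> k then 1 / real k else 0)"

end

theory Submission
  imports Defs
begin


lemma cmp_lemma:
  fixes u h :: "real \<Rightarrow> real" and T :: real
  assumes hi: "\<forall>t\<in>{0..T}. (h has_integral u t) {0..t}"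
    and hs: "\<forall>r\<in>{0..T}. u r \<le> 0 \<longrightarrow> 0 \<le> h r"
  shows "\<forall>t\<in>{0..T}. 0 \<le> u t"
proof (rule ccontr)
  assume "\<not> (\<forall>t\<in>{0..T}. 0 \<le> u t)"
  then obtain t1 where t1: "t1 \<in> {0..T}" "u t1 < 0" by force
  have T0: "0 \<le> T" using t1 by auto
  have hint: "h integrable_on {0..T}" using hi T0 by auto
  have ueq: "\<forall>t\<in>{0..T}. u t = integral {0..t} h" proof
    fix t assume "t \<in> {0..T}" then show "u t = integral {0..t} h" using hi integral_unique by metis
  qed
  have cu: "continuous_on {0..T} u"
    using continuous_on_eq[OF indefinite_integral_continuous_1[OF hint]] ueq by auto
  have u0: "u 0 = 0"
  proof -
    have "0 \<in> {0..T}" using T0 by simp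
    then have "(h has_integral u 0) {0..0}" using hi by blast
    then have "(h has_integral u 0) {0}" by simp
    then show ?thesis using has_integral_refl(2)[of h 0] has_integral_unique by blast
  qed
  define Z where "Z = {0..t1} \<inter> u -` {0..}"
  have cu1: "continuous_on {0..t1} u" using cu t1 by (auto intro: continuous_on_subset)
  have Zc: "closed Z" unfolding Z_def by (rule continuous_closed_preimage[OF cu1]) auto
  have Zne: "0 \<in> Z" using u0 t1 by (auto simp: Z_def)
  have Zb: "bdd_above Z" unfolding Z_def by (auto intro: bdd_aboveI[where M=t1])
  define t0 where "t0 = Sup Z"
  have t0Z: "t0 \<in> Z" unfolding t0_def using closed_contains_Sup[OF _ Zb Zc] Zne by auto
  have t0le: "\<And>r. r \<in> Z \<Longrightarrow> r \<le> t0" unfolding t0_def using Zb by (auto intro: cSup_upper)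
  have t01: "0 \<le> t0" "t0 \<le> t1" "0 \<le> u t0" using t0Z by (auto simp: Z_def)
  have neg: "\<And>r. t0 < r \<Longrightarrow> r \<le> t1 \<Longrightarrow> u r < 0"
  proof (rule ccontr)
    fix r assume "t0 < r" "r \<le> t1" "\<not> u r < 0"
    then have "r \<in> Z" using t01 by (auto simp: Z_def)
    then show False using t0le \<open>t0 < r\<close> by force
  qed
  have hint1: "h integrable_on {0..t1}" using hi t1 by auto
  have comb: "integral {0..t0} h + integral {t0..t1} h = integral {0..t1} h"
    using Henstock_Kurzweil_Integration.integral_combine[OF t01(1) t01(2) hint1] .
  have i1: "(h has_integral integral {t0..t1} h) {t0..t1}"
    using integrable_subinterval_real[OF hint1, of t0 t1] t01 by (auto intro: integrable_integral)
  have i2: "((\<lambda>r. if r = t0 then 0 else h r) has_integral integral {t0..t1} h) {t0..t1}"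
    using has_integral_spike_finite_eq[of "{t0}" "{t0..t1}" "\<lambda>r. if r = t0 then 0 else h r" h] i1 by auto
  have "0 \<le> integral {t0..t1} h"
  proof (rule has_integral_nonneg[OF i2])
    fix x assume x: "x \<in> {t0..t1}"
    show "0 \<le> (if x = t0 then 0 else h x)"
    proof (cases "x = t0")
      case False
      then have "u x < 0" using neg x by auto
      then show ?thesis using hs x t1 t01 False by auto
    qed simp
  qed
  moreover have "u t1 = integral {0..t1} h" "u t0 = integral {0..t0} h" using ueq t1 t01 by auto
  ultimately show False using comb t01 t1 by linarith
qed




definition MM :: "nat \<Rightarrow> (nat\<Rightarrow>real) \<Rightarrow> real \<Rightarrow> real" where
  "MM N x0 t = pmean N x0 * exp (- t / real N)"
definition CC :: "nat \<Rightarrow> (nat\<Rightarrow>real) \<Rightarrow> nat \<Rightarrow> real \<Rightarrow> real" where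
  "CC N x0 i t = exp (-t) * x0 i + pmean N x0 * real N / (real N - 1) * (exp (- t / real N) - exp (-t))"

lemma MM_deriv: assumes "N > 0" shows "(MM N x0 has_real_derivative (- MM N x0 t / real N)) (at t)"
proof -
  have "((\<lambda>t. pmean N x0 * exp (- t / real N)) has_real_derivative
     pmean N x0 * (exp (- t / real N) * (- 1 / real N))) (at t)"
    using assms by (auto intro!: derivative_eq_intros)
  then show ?thesis unfolding MM_def using assms by (auto simp: field_simps)
qed

lemma CC_deriv: assumes "N \<ge> 2" shows "(CC N x0 i has_real_derivative (- CC N x0 i t + MM N x0 t)) (at t)"
proof -
  have d: "((\<lambda>t. exp (-t) * x0 i + pmean N x0 * real N / (real N - 1) * (exp (- t / real N) - exp (-t))) has_real_derivative
     exp (-t) * (-1) * x0 i + pmean N x0 * real N / (real N - 1) * (exp (- t / real N) * (- 1 / real N) - exp (-t) * (-1))) (at t)"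
    using assms by (auto intro!: derivative_eq_intros)
  have f: "CC N x0 i = (\<lambda>t. exp (-t) * x0 i + pmean N x0 * real N / (real N - 1) * (exp (- t / real N) - exp (-t)))"
    by (rule ext) (simp add: CC_def)
  have nz: "real N - 1 \<noteq> 0" "real N \<noteq> 0" using assms by auto
  have e: "exp (-t) * (-1) * x0 i + pmean N x0 * real N / (real N - 1) * (exp (- t / real N) * (- 1 / real N) - exp (-t) * (-1))
     = - CC N x0 i t + MM N x0 t"
    unfolding CC_def MM_def using nz by (simp add: field_simps)
  show ?thesis using d unfolding f[symmetric] e .
qed

lemma MM_int: assumes "N > 0" "0 \<le> t" shows "((\<lambda>s. - MM N x0 s / real N) has_integral (MM N x0 t - pmean N x0)) {0..t}"
proof -
  have "((\<lambda>s. - MM N x0 s / real N) has_integral (MM N x0 t - MM N x0 0)) {0..t}"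
    apply (rule fundamental_theorem_of_calculus[OF assms(2)])
    using has_field_derivative_at_within[OF MM_deriv[OF assms(1)]]
    by (simp add: has_real_derivative_iff_has_vector_derivative[symmetric])
  then show ?thesis by (simp add: MM_def)
qed

lemma CC_int: assumes "N \<ge> 2" "0 \<le> t" shows "((\<lambda>s. - CC N x0 i s + MM N x0 s) has_integral (CC N x0 i t - x0 i)) {0..t}"
proof -
  have "((\<lambda>s. - CC N x0 i s + MM N x0 s) has_integral (CC N x0 i t - CC N x0 i 0)) {0..t}"
    apply (rule fundamental_theorem_of_calculus[OF assms(2)])
    using has_field_derivative_at_within[OF CC_deriv[OF assms(1)]]
    by (simp add: has_real_derivative_iff_has_vector_derivative[symmetric])
  then show ?thesis by (simp add: CC_def)
qed




lemma sol_mean: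
  assumes N2: "N \<ge> 2" and fs: "full_strength N T \<alpha>" and so: "solves N T \<alpha> \<xi>"
    and i0: "\<forall>i\<in>{1..N}. \<xi> 0 i = x0 i"
  shows "\<forall>t\<in>{0..T}. pmean N (\<xi> t) = MM N x0 t"
proof -
  have Npos: "N > 0" and nz: "real N \<noteq> 0" using N2 by auto
  have p0: "pmean N (\<xi> 0) = pmean N x0" using i0 unfolding pmean_def by simp
  have key: "((\<lambda>s. - pmean N (\<xi> s) / real N) has_integral (pmean N (\<xi> t) - pmean N x0)) {0..t}"
    if t: "t \<in> {0..T}" for t
  proof -
    have each: "\<And>i. i \<in> {1..N} \<Longrightarrow> ((\<lambda>s. - \<xi> s i + (1 - \<alpha> s i) * pmean N (\<xi> s)) has_integral (\<xi> t i - \<xi> 0 i)) {0..t}"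
      using so t unfolding solves_def by blast
    have sm: "((\<lambda>s. \<Sum>i\<in>{1..N}. - \<xi> s i + (1 - \<alpha> s i) * pmean N (\<xi> s)) has_integral (\<Sum>i\<in>{1..N}. \<xi> t i - \<xi> 0 i)) {0..t}"
      by (rule has_integral_sum) (use each in auto)
    have integrand: "(\<Sum>i\<in>{1..N}. - \<xi> s i + (1 - \<alpha> s i) * pmean N (\<xi> s)) = - pmean N (\<xi> s)"
      if s: "s \<in> {0..t}" for s
    proof -
      have sa: "(\<Sum>i=1..N. \<alpha> s i) = 1" using fs s t unfolding full_strength_def by auto
      have sx: "(\<Sum>i=1..N. \<xi> s i) = real N * pmean N (\<xi> s)" using nz unfolding pmean_def by simp
      have "(\<Sum>i\<in>{1..N}. - \<xi> s i + (1 - \<alpha> s i) * pmean N (\<xi> s))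
          = - (\<Sum>i=1..N. \<xi> s i) + (real N - (\<Sum>i=1..N. \<alpha> s i)) * pmean N (\<xi> s)"
        by (simp add: sum.distrib sum_subtractf sum_distrib_right left_diff_distrib sum_negf)
      also have "\<dots> = - pmean N (\<xi> s)" using sa sx by (simp add: algebra_simps)
      finally show ?thesis .
    qed
    have val: "(\<Sum>i\<in>{1..N}. \<xi> t i - \<xi> 0 i) = real N * (pmean N (\<xi> t) - pmean N x0)"
      using nz p0 unfolding pmean_def by (simp add: sum_subtractf right_diff_distrib)
    have "((\<lambda>s. - pmean N (\<xi> s)) has_integral real N * (pmean N (\<xi> t) - pmean N x0)) {0..t}"
      using has_integral_eq[OF integrand sm] val by simp
    from has_integral_mult_right[OF this, of "1 / real N"]
    show ?thesis using nz by simp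
  qed
  define u where "u s = pmean N (\<xi> s) - MM N x0 s" for s
  have ui: "((\<lambda>s. - u s / real N) has_integral u t) {0..t}" if "t \<in> {0..T}" for t
    using has_integral_diff[OF key[OF that] MM_int[OF Npos, of t x0]] that
    unfolding u_def by (simp add: diff_divide_distrib)
  have ui2: "((\<lambda>s. - (- u s) / real N) has_integral (- u t)) {0..t}" if "t \<in> {0..T}" for t
    using has_integral_neg[OF ui[OF that]] by simp
  have c1: "\<forall>t\<in>{0..T}. 0 \<le> u t"
    by (rule cmp_lemma[where h="\<lambda>s. - u s / real N"]) (use ui in \<open>auto simp: divide_nonpos_pos Npos\<close>)
  have c2: "\<forall>t\<in>{0..T}. 0 \<le> - u t"
    by (rule cmp_lemma[where h="\<lambda>s. - (- u s) / real N"]) (use ui2 in \<open>auto simp: Npos\<close>)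
  show ?thesis using c1 c2 unfolding u_def by force
qed

lemma sol_comp:
  assumes N2: "N \<ge> 2" and fs: "full_strength N T \<alpha>" and so: "solves N T \<alpha> \<xi>"
    and i0: "\<forall>i\<in>{1..N}. \<xi> 0 i = x0 i" and m0: "pmean N x0 \<ge> 0" and i: "i \<in> {1..N}"
  shows "\<forall>t\<in>{0..T}. \<xi> t i \<le> CC N x0 i t"
    and "(\<forall>t\<in>{0..T}. \<alpha> t i = 0) \<Longrightarrow> \<forall>t\<in>{0..T}. \<xi> t i = CC N x0 i t"
proof -
  have mean: "\<forall>t\<in>{0..T}. pmean N (\<xi> t) = MM N x0 t" by (rule sol_mean[OF N2 fs so i0])
  define u where "u s = CC N x0 i s - \<xi> s i" for s
  define h where "h s = (- CC N x0 i s + MM N x0 s) - (- \<xi> s i + (1 - \<alpha> s i) * pmean N (\<xi> s))" for s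
  have ui: "(h has_integral u t) {0..t}" if t: "t \<in> {0..T}" for t
  proof -
    have a: "((\<lambda>s. - \<xi> s i + (1 - \<alpha> s i) * pmean N (\<xi> s)) has_integral (\<xi> t i - \<xi> 0 i)) {0..t}"
      using so t i unfolding solves_def by blast
    have b: "((\<lambda>s. - CC N x0 i s + MM N x0 s) has_integral (CC N x0 i t - x0 i)) {0..t}"
      using CC_int[OF N2, of t x0 i] t by auto
    show ?thesis using has_integral_diff[OF b a] i0 i unfolding u_def h_def by simp
  qed
  have hform: "h r = - u r + \<alpha> r i * MM N x0 r" if r: "r \<in> {0..T}" for r
    using mean r unfolding h_def u_def by (simp add: algebra_simps)
  have Mpos: "0 \<le> MM N x0 r" for r using m0 unfolding MM_def by simp
  have al: "0 \<le> \<alpha> r i" if "r \<in> {0..T}" for r using fs that i unfolding full_strength_def by auto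
  have c1: "\<forall>t\<in>{0..T}. 0 \<le> u t"
  proof (rule cmp_lemma[where h=h])
    show "\<forall>t\<in>{0..T}. (h has_integral u t) {0..t}" using ui by auto
    show "\<forall>r\<in>{0..T}. u r \<le> 0 \<longrightarrow> 0 \<le> h r"
    proof (intro ballI impI)
      fix r assume r: "r \<in> {0..T}" "u r \<le> 0"
      have "0 \<le> \<alpha> r i * MM N x0 r" using al[OF r(1)] Mpos by simp
      then show "0 \<le> h r" using hform[OF r(1)] r(2) by linarith
    qed
  qed
  then show "\<forall>t\<in>{0..T}. \<xi> t i \<le> CC N x0 i t" unfolding u_def by auto
  assume z: "\<forall>t\<in>{0..T}. \<alpha> t i = 0"
  have c2: "\<forall>t\<in>{0..T}. 0 \<le> - u t"
  proof (rule cmp_lemma[where h="\<lambda>s. - h s"])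
    show "\<forall>t\<in>{0..T}. ((\<lambda>s. - h s) has_integral - u t) {0..t}" using ui by (auto intro: has_integral_neg)
    show "\<forall>r\<in>{0..T}. - u r \<le> 0 \<longrightarrow> 0 \<le> - h r"
      using hform z by auto
  qed
  show "\<forall>t\<in>{0..T}. \<xi> t i = CC N x0 i t" using c1 c2 unfolding u_def by force
qed




lemma opt_lemma:
  assumes N2: "N \<ge> 2" and m0: "pmean N x0 \<ge> 0" and T0: "0 \<le> T"
    and fs: "full_strength N T \<alpha>" and so: "solves N T \<alpha> \<xi>" and i0: "\<forall>i\<in>{1..N}. \<xi> 0 i = x0 i"
    and eq: "\<forall>i\<in>{1..N}. i \<le> l \<longrightarrow> \<xi> T i = lam"
    and hi: "\<forall>i\<in>{1..N}. l < i \<longrightarrow> \<xi> T i = CC N x0 i T \<and> CC N x0 i T \<le> lam"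
  shows "optimal N T x0 \<alpha> \<xi>"
  unfolding optimal_def
proof (intro conjI allI impI)
  show "full_strength N T \<alpha>" "solves N T \<alpha> \<xi>" "\<forall>i\<in>{1..N}. \<xi> 0 i = x0 i" using fs so i0 by auto
  fix \<alpha>' \<xi>' assume h: "full_strength N T \<alpha>' \<and> solves N T \<alpha>' \<xi>' \<and> (\<forall>i\<in>{1..N}. \<xi>' 0 i = x0 i)"
  have TT: "T \<in> {0..T}" using T0 by simp
  have nz: "real N \<noteq> 0" using N2 by auto
  have m1: "pmean N (\<xi> T) = MM N x0 T" using sol_mean[OF N2 fs so i0] TT by auto
  have m2: "pmean N (\<xi>' T) = MM N x0 T" using sol_mean[OF N2, of T \<alpha>' \<xi>' x0] h TT by auto
  have sums: "(\<Sum>i=1..N. \<xi>' T i) = (\<Sum>i=1..N. \<xi> T i)"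
  proof -
    have "(\<Sum>i=1..N. \<xi>' T i) / real N = (\<Sum>i=1..N. \<xi> T i) / real N" using m1 m2 unfolding pmean_def by simp
    then show ?thesis using nz by (simp add: divide_cancel_right)
  qed
  have le: "\<xi>' T i \<le> CC N x0 i T" if "i \<in> {1..N}" for i
    using sol_comp(1)[OF N2, of T \<alpha>' \<xi>' x0 i] h m0 that TT by auto
  have tm: "2 * lam * (\<xi>' T i - \<xi> T i) \<le> (\<xi>' T i)^2 - (\<xi> T i)^2" if i: "i \<in> {1..N}" for i
  proof (cases "i \<le> l")
    case True
    then have "\<xi> T i = lam" using eq i by auto
    have "0 \<le> (\<xi>' T i - lam)^2" by simp
    then show ?thesis using \<open>\<xi> T i = lam\<close> by (simp add: power2_eq_square algebra_simps)
  next
    case False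
    then have a: "\<xi> T i = CC N x0 i T" "CC N x0 i T \<le> lam" using hi i by auto
    have "\<xi>' T i - \<xi> T i \<le> 0" "\<xi>' T i + \<xi> T i - 2 * lam \<le> 0" using a le[OF i] by auto
    then have "0 \<le> (\<xi>' T i - \<xi> T i) * (\<xi>' T i + \<xi> T i - 2 * lam)" by (rule mult_nonpos_nonpos)
    then show ?thesis by (simp add: power2_eq_square algebra_simps)
  qed
  have "(\<Sum>i=1..N. 2 * lam * (\<xi>' T i - \<xi> T i)) \<le> (\<Sum>i=1..N. (\<xi>' T i)^2 - (\<xi> T i)^2)"
    by (rule sum_mono) (use tm in auto)
  moreover have "(\<Sum>i=1..N. 2 * lam * (\<xi>' T i - \<xi> T i)) = 0"
    using sums by (simp add: sum_distrib_left[symmetric] sum_subtractf)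
  ultimately have "(\<Sum>i=1..N. (\<xi> T i)^2) \<le> (\<Sum>i=1..N. (\<xi>' T i)^2)"
    by (simp add: sum_subtractf)
  then show "Vfun N (\<xi> T) \<le> Vfun N (\<xi>' T)" unfolding Vfun_def
    by (simp add: divide_right_mono)
qed




definition DD :: "(nat \<Rightarrow> real) \<Rightarrow> nat \<Rightarrow> real" where
  "DD x0 l = (\<Sum>j=1..l. x0 j - x0 (l+1))"
definition AA :: "nat \<Rightarrow> (nat \<Rightarrow> real) \<Rightarrow> nat \<Rightarrow> real" where
  "AA N x0 l = (real N - 1) / real N * DD x0 l / pmean N x0 + 1"

lemma DD_alt: "DD x0 l = (\<Sum>j=1..l. x0 j) - real l * x0 (l+1)"
  unfolding DD_def by (simp add: sum_subtractf)

lemma tsw_eq1: assumes "1 \<le> l" and m0: "pmean N x0 > 0" and N2: "N \<ge> 2" shows "tsw N x0 (l+1) = real N / (real N - 1) * ln (AA N x0 l)"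
proof -
  have "real l * ((real N - 1) / real N) * ((pmean l x0 - x0 (l+1)) / pmean N x0)
      = (real N - 1) / real N * DD x0 l / pmean N x0"
  proof -
    have e: "real l * (pmean l x0 - x0 (l+1)) = DD x0 l" using assms unfolding DD_alt pmean_def by (simp add: field_simps)
    have "real l * ((real N - 1) / real N) * ((pmean l x0 - x0 (l+1)) / pmean N x0)
      = (real N - 1) / real N * (real l * (pmean l x0 - x0 (l+1))) / pmean N x0"
      using m0 N2 by (simp add: field_simps)
    then show ?thesis unfolding e .
  qed
  moreover have "tsw N x0 (l+1) = real N / (real N - 1) * ln (real l * ((real N - 1) / real N) * ((pmean l x0 - x0 (l+1)) / pmean N x0) + 1)"
    using assms by (simp add: tsw_def)
  ultimately show ?thesis unfolding AA_def by (simp only:)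
qed

lemma tsw_eq: assumes m0: "pmean N x0 > 0" and N2: "N \<ge> 2" shows "tsw N x0 (l+1) = real N / (real N - 1) * ln (AA N x0 l)"
proof (cases "l = 0")
  case True
  then show ?thesis by (simp add: tsw_def AA_def DD_def)
qed (use tsw_eq1 assms in auto)

lemma sum_split_l: fixes l N :: nat assumes "l \<le> N" shows "(\<Sum>i=1..N. f i) = (\<Sum>i=1..l. f i) + (\<Sum>i=l+1..N. (f i :: real))"
proof -
  have "{1..N} = {1..l} \<union> {l+1..N}" using assms by auto
  moreover have "{1..l} \<inter> {l+1..N} = {}" by auto
  ultimately show ?thesis by (simp add: sum.union_disjoint)
qed

lemma Phi_eq:
  assumes N2: "N \<ge> 2" and l: "l < N" and m0: "pmean N x0 > 0"
  shows "real l * CC N x0 (l+1) t + (\<Sum>i=l+1..N. CC N x0 i t) - real N * MM N x0 t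
     = exp (-t) * (real N * pmean N x0 / (real N - 1)) * (exp ((real N - 1) * t / real N) - AA N x0 l)"
proof -
  define m where "m = pmean N x0"
  define K where "K = m * real N / (real N - 1) * (exp (- t / real N) - exp (-t))"
  have nz: "real N \<noteq> 0" "real N - 1 \<noteq> 0" using N2 by auto
  have CCk: "CC N x0 i t = exp (-t) * x0 i + K" for i unfolding CC_def K_def m_def by simp
  have card: "card {l+1..N} = N - l" by simp
  have s1: "(\<Sum>i=l+1..N. CC N x0 i t) = exp (-t) * (\<Sum>i=l+1..N. x0 i) + real (N - l) * K"
    unfolding CCk by (simp add: sum.distrib sum_distrib_left)
  have tot: "(\<Sum>i=1..N. x0 i) = real N * m" unfolding m_def pmean_def using nz by simp
  have spl: "(\<Sum>i=1..N. x0 i) = (\<Sum>i=1..l. x0 i) + (\<Sum>i=l+1..N. x0 i)" using sum_split_l[of l N] l by auto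
  have rl: "real (N - l) = real N - real l" using l by simp
  have ee: "exp ((real N - 1) * t / real N) * exp (-t) = exp (- t / real N)"
    unfolding exp_add[symmetric] using nz by (simp add: field_simps)
  have "real l * CC N x0 (l+1) t + (\<Sum>i=l+1..N. CC N x0 i t) - real N * MM N x0 t
     = exp (-t) * (real N * m - DD x0 l) + real N * K - real N * m * exp (- t / real N)"
  proof -
    have "real l * CC N x0 (l+1) t + (\<Sum>i=l+1..N. CC N x0 i t) - real N * MM N x0 t
      = real l * (exp (-t) * x0 (l+1) + K) + (exp (-t) * (\<Sum>i=l+1..N. x0 i) + (real N - real l) * K) - real N * (m * exp (-t / real N))"
      unfolding s1 rl CCk[of "l+1"] MM_def m_def by simp
    also have "\<dots> = exp (-t) * (real N * m - DD x0 l) + real N * K - real N * m * exp (- t / real N)"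
    proof -
      have hm: "m * (real N * z) = (\<Sum>i=1..l. x0 i) * z + (\<Sum>i=l+1..N. x0 i) * z" for z
        using tot spl by (metis distrib_right mult.assoc mult.commute)
      show ?thesis unfolding DD_alt by (simp add: algebra_simps hm)
    qed
    finally show ?thesis .
  qed
  also have "\<dots> = exp (-t) * (real N * m / (real N - 1)) * (exp ((real N - 1) * t / real N) - AA N x0 l)"
    unfolding K_def AA_def m_def[symmetric] ee[symmetric] using nz m0 unfolding m_def[symmetric]
    by (simp add: field_simps)
  finally show ?thesis unfolding m_def .
qed

lemma AA_pos: assumes N2: "N \<ge> 2" and m0: "pmean N x0 > 0" and D: "DD x0 l \<ge> 0" shows "AA N x0 l \<ge> 1"
  unfolding AA_def using assms by (simp add: divide_nonneg_pos)

lemma Phi_le: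
  assumes N2: "N \<ge> 2" and l: "l < N" and m0: "pmean N x0 > 0" and D: "DD x0 l \<ge> 0"
    and t: "t \<le> tsw N x0 (l+1)"
  shows "real l * CC N x0 (l+1) t + (\<Sum>i=l+1..N. CC N x0 i t) - real N * MM N x0 t \<le> 0"
proof -
  have A: "AA N x0 l \<ge> 1" by (rule AA_pos[OF N2 m0 D])
  have n1: "real N - 1 > 0" using N2 by auto
  have "(real N - 1) * t / real N \<le> ln (AA N x0 l)"
    using t unfolding tsw_eq[OF m0 N2] using n1 N2 by (simp add: field_simps)
  then have "exp ((real N - 1) * t / real N) \<le> AA N x0 l" using A
    by (metis exp_le_cancel_iff exp_ln less_le_trans zero_less_one)
  moreover have "0 \<le> exp (-t) * (real N * pmean N x0 / (real N - 1))" using m0 n1 by simp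
  ultimately show ?thesis unfolding Phi_eq[OF N2 l m0]
    by (intro mult_nonneg_nonpos) auto
qed

lemma Phi_ge:
  assumes N2: "N \<ge> 2" and l: "l < N" and m0: "pmean N x0 > 0" and D: "DD x0 l \<ge> 0"
    and t: "tsw N x0 (l+1) \<le> t"
  shows "0 \<le> real l * CC N x0 (l+1) t + (\<Sum>i=l+1..N. CC N x0 i t) - real N * MM N x0 t"
proof -
  have A: "AA N x0 l \<ge> 1" by (rule AA_pos[OF N2 m0 D])
  have n1: "real N - 1 > 0" using N2 by auto
  have "ln (AA N x0 l) \<le> (real N - 1) * t / real N"
    using t unfolding tsw_eq[OF m0 N2] using n1 N2 by (simp add: field_simps)
  then have "AA N x0 l \<le> exp ((real N - 1) * t / real N)" using A
    by (metis exp_le_cancel_iff exp_ln less_le_trans zero_less_one)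
  moreover have "0 \<le> exp (-t) * (real N * pmean N x0 / (real N - 1))" using m0 n1 by simp
  ultimately show ?thesis unfolding Phi_eq[OF N2 l m0]
    by (intro mult_nonneg_nonneg) (use m0 n1 in auto)
qed




locale gsetup = fixes N :: nat and x0 :: "nat \<Rightarrow> real"
  assumes N2: "N \<ge> 2" and m0: "pmean N x0 > 0"
    and dec: "\<forall>i j. 1 \<le> i \<and> i \<le> j \<and> j \<le> N \<longrightarrow> x0 j \<le> x0 i"
begin

definition GG where "GG k t = (real N * MM N x0 t - (\<Sum>j=k+1..N. CC N x0 j t)) / real k"
definition KK where "KK t = Max {l\<in>{1..N}. tsw N x0 l \<le> t}"
definition LL where "LL t = Max ((\<lambda>k. GG k t) ` {1..N})"
definition XI where "XI t i = min (CC N x0 i t) (LL t)"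

lemma DD_nonneg: assumes "l < N" shows "0 \<le> DD x0 l"
  unfolding DD_def using dec assms by (intro sum_nonneg) auto

lemma CC_mono: assumes "1 \<le> i" "i \<le> j" "j \<le> N" shows "CC N x0 j t \<le> CC N x0 i t"
  unfolding CC_def using dec assms by auto

lemma KK_props: assumes t: "0 \<le> t"
  shows "KK t \<in> {1..N}" "tsw N x0 (KK t) \<le> t" "KK t < N \<Longrightarrow> t < tsw N x0 (KK t + 1)"
proof -
  define S where "S = {l\<in>{1..N}. tsw N x0 l \<le> t}"
  have fin: "finite S" unfolding S_def by auto
  have one: "1 \<in> S" unfolding S_def using N2 t by (auto simp: tsw_def)
  have inS: "KK t \<in> S" unfolding KK_def S_def[symmetric] using fin one by (auto intro: Max_in)
  then show "KK t \<in> {1..N}" "tsw N x0 (KK t) \<le> t" unfolding S_def by auto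
  assume "KK t < N"
  show "t < tsw N x0 (KK t + 1)"
  proof (rule ccontr)
    assume "\<not> t < tsw N x0 (KK t + 1)"
    then have "KK t + 1 \<in> S" unfolding S_def using \<open>KK t < N\<close> by auto
    then have "KK t + 1 \<le> KK t" unfolding KK_def S_def[symmetric] using fin by (auto intro: Max_ge)
    then show False by simp
  qed
qed

lemma W2: assumes t: "0 \<le> t" and i: "i \<in> {1..N}" "KK t < i"
  shows "CC N x0 i t \<le> GG (KK t) t"
proof -
  define k where "k = KK t"
  have k: "k \<in> {1..N}" "k < N" using KK_props(1)[OF t] i unfolding k_def by auto
  have "t < tsw N x0 (k + 1)" using KK_props(3)[OF t] k unfolding k_def by auto
  then have tt: "t \<le> tsw N x0 (k + 1)" by simp
  from Phi_le[OF N2 k(2) m0 DD_nonneg[OF k(2)] tt]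
  have "real k * CC N x0 (k+1) t \<le> real N * MM N x0 t - (\<Sum>i=k+1..N. CC N x0 i t)" by simp
  then have "CC N x0 (k+1) t \<le> GG k t" unfolding GG_def using k by (simp add: pos_le_divide_eq mult.commute)
  moreover have "CC N x0 i t \<le> CC N x0 (k+1) t" using CC_mono[of "k+1" i t] i k unfolding k_def by auto
  ultimately show ?thesis unfolding k_def by simp
qed

lemma W1: assumes t: "0 \<le> t" and i: "i \<in> {1..N}" "i \<le> KK t"
  shows "GG (KK t) t \<le> CC N x0 i t"
proof -
  define k where "k = KK t"
  have k: "k \<in> {1..N}" using KK_props(1)[OF t] unfolding k_def by auto
  have l: "k - 1 < N" and kk: "k - 1 + 1 = k" using k by auto
  have "tsw N x0 (k - 1 + 1) \<le> t" unfolding kk using KK_props(2)[OF t] unfolding k_def .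
  from Phi_ge[OF N2 l m0 DD_nonneg[OF l] this]
  have "0 \<le> real (k - 1) * CC N x0 k t + (\<Sum>i=k..N. CC N x0 i t) - real N * MM N x0 t" unfolding kk .
  moreover have "(\<Sum>i=k..N. CC N x0 i t) = CC N x0 k t + (\<Sum>i=k+1..N. CC N x0 i t)"
    using k by (simp add: sum.atLeast_Suc_atMost)
  moreover have "real (k - 1) = real k - 1" using k by auto
  ultimately have "real N * MM N x0 t - (\<Sum>i=k+1..N. CC N x0 i t) \<le> real k * CC N x0 k t"
    by (simp add: algebra_simps)
  then have "GG k t \<le> CC N x0 k t" unfolding GG_def using k by (simp add: pos_divide_le_eq mult.commute)
  moreover have "CC N x0 k t \<le> CC N x0 i t" using CC_mono[of i k t] i k unfolding k_def by auto
  ultimately show ?thesis unfolding k_def by simp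
qed

lemma split2: fixes a b :: nat assumes "a \<le> b" "b \<le> N"
  shows "(\<Sum>i=a+1..N. f i) = (\<Sum>i=a+1..b. f i) + (\<Sum>i=b+1..N. (f i :: real))"
proof -
  have "{a+1..N} = {a+1..b} \<union> {b+1..N}" using assms by auto
  moreover have "{a+1..b} \<inter> {b+1..N} = {}" by auto
  ultimately show ?thesis by (simp add: sum.union_disjoint)
qed

lemma GG_le: assumes t: "0 \<le> t" and j: "j \<in> {1..N}" shows "GG j t \<le> GG (KK t) t"
proof -
  define k where "k = KK t"
  define lam where "lam = GG k t"
  define P where "P j = real N * MM N x0 t - (\<Sum>i=j+1..N. CC N x0 i t)" for j
  have k: "k \<in> {1..N}" using KK_props(1)[OF t] unfolding k_def by auto
  have Pk: "P k = real k * lam" unfolding P_def lam_def GG_def using k by simp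
  have "P j \<le> real j * lam"
  proof (cases "k \<le> j")
    case True
    have "(\<Sum>i=k+1..j. CC N x0 i t) \<le> of_nat (card {k+1..j}) * lam"
      by (rule sum_bounded_above) (use W2[OF t] j in \<open>auto simp: k_def lam_def\<close>)
    moreover have "P j = P k + (\<Sum>i=k+1..j. CC N x0 i t)"
      unfolding P_def using split2[OF True, of "\<lambda>i. CC N x0 i t"] j by simp
    moreover have "real (card {k+1..j}) = real j - real k" using True by simp
    ultimately show ?thesis using Pk by (simp add: algebra_simps)
  next
    case False
    have "of_nat (card {j+1..k}) * lam \<le> (\<Sum>i=j+1..k. CC N x0 i t)"
      by (rule sum_bounded_below) (use W1[OF t] k in \<open>auto simp: k_def lam_def\<close>)
    moreover have "P k = P j + (\<Sum>i=j+1..k. CC N x0 i t)"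
      unfolding P_def using split2[of j k "\<lambda>i. CC N x0 i t"] False k by simp
    moreover have "real (card {j+1..k}) = real k - real j" using False by simp
    ultimately show ?thesis using Pk by (simp add: algebra_simps)
  qed
  then have "GG j t \<le> lam" unfolding GG_def P_def[symmetric] using j by (simp add: pos_divide_le_eq mult.commute)
  then show ?thesis unfolding lam_def k_def .
qed

lemma LL_eq: assumes t: "0 \<le> t" shows "LL t = GG (KK t) t"
  unfolding LL_def
  by (rule Max_eqI) (use GG_le[OF t] KK_props(1)[OF t] in auto)

lemma XI_eq: assumes t: "0 \<le> t" and i: "i \<in> {1..N}"
  shows "XI t i = (if i \<le> KK t then GG (KK t) t else CC N x0 i t)"
  unfolding XI_def LL_eq[OF t] using W1[OF t i] W2[OF t i] by auto

lemma XI_sum: assumes t: "0 \<le> t" shows "(\<Sum>i=1..N. XI t i) = real N * MM N x0 t"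
proof -
  define k where "k = KK t"
  have k: "k \<in> {1..N}" using KK_props(1)[OF t] unfolding k_def by auto
  have "(\<Sum>i=1..N. XI t i) = (\<Sum>i=1..k. XI t i) + (\<Sum>i=k+1..N. XI t i)"
    using sum_split_l[of k N "\<lambda>i. XI t i"] k by auto
  also have "(\<Sum>i=1..k. XI t i) = (\<Sum>i=1..k. GG k t)"
    by (rule sum.cong) (use XI_eq[OF t] k in \<open>auto simp: k_def\<close>)
  also have "(\<Sum>i=k+1..N. XI t i) = (\<Sum>i=k+1..N. CC N x0 i t)"
    by (rule sum.cong) (use XI_eq[OF t] k in \<open>auto simp: k_def\<close>)
  finally show ?thesis unfolding GG_def using k by simp
qed

lemma XI_mean: assumes t: "0 \<le> t" shows "pmean N (XI t) = MM N x0 t"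
  unfolding pmean_def XI_sum[OF t] using N2 by simp

lemma XI_0: assumes i: "i \<in> {1..N}" shows "XI 0 i = x0 i"
proof -
  define k where "k = KK 0"
  have k: "k \<in> {1..N}" using KK_props(1)[of 0] unfolding k_def by auto
  have CC0: "CC N x0 j 0 = x0 j" for j unfolding CC_def by simp
  show ?thesis
  proof (cases "i \<le> k")
    case False
    then show ?thesis using XI_eq[of 0 i] i CC0 unfolding k_def by auto
  next
    case True
    define G where "G = GG k 0"
    have ge: "G \<le> x0 j" if "j \<in> {1..k}" for j using W1[of 0 j] that k CC0 unfolding G_def k_def by auto
    have "real N * MM N x0 0 = (\<Sum>j=1..N. x0 j)" unfolding MM_def pmean_def using N2 by simp
    then have "real k * G = (\<Sum>j=1..k. x0 j)"
      unfolding G_def GG_def CC0 using sum_split_l[of k N x0] k by simp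
    then have "(\<Sum>j=1..k. x0 j - G) = 0" by (simp add: sum_subtractf)
    then have "\<forall>j\<in>{1..k}. x0 j - G = 0" using ge by (subst sum_nonneg_eq_0_iff[symmetric]) auto
    then have "x0 i = G" using True i by auto
    then show ?thesis using XI_eq[of 0 i] i True unfolding k_def G_def by auto
  qed
qed

end



lemma continuous_on_Max_img:
  fixes f :: "'b \<Rightarrow> 'a::topological_space \<Rightarrow> real"
  assumes "finite A" "A \<noteq> {}" "\<And>a. a \<in> A \<Longrightarrow> continuous_on S (f a)"
  shows "continuous_on S (\<lambda>t. Max ((\<lambda>a. f a t) ` A))"
  using assms
proof (induction A rule: finite_ne_induct)
  case (singleton x)
  then show ?case by simp
next
  case (insert x F)
  have "(\<lambda>t. Max ((\<lambda>a. f a t) ` insert x F)) = (\<lambda>t. max (f x t) (Max ((\<lambda>a. f a t) ` F)))"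
    using insert by (auto simp: Max_insert)
  then show ?case using insert by (auto intro!: continuous_on_max)
qed

context gsetup begin

lemma GG_cont: "continuous_on S (GG k)"
  unfolding GG_def[abs_def] MM_def CC_def divide_inverse by (intro continuous_intros)

lemma XI_cont: "continuous_on S (\<lambda>t. XI t i)"
proof -
  have "continuous_on S LL"
    unfolding LL_def[abs_def] by (rule continuous_on_Max_img) (use N2 GG_cont in auto)
  then show ?thesis unfolding XI_def[abs_def] CC_def
    by (intro continuous_intros) (use N2 in auto)
qed

lemma KK_local: assumes x: "0 < x" "x \<notin> tsw N x0 ` {1..N}"
  shows "\<exists>d>0. \<forall>s. dist s x < d \<longrightarrow> 0 < s \<and> KK s = KK x"
proof -
  define d where "d = min x (Min ((\<lambda>l. \<bar>x - tsw N x0 l\<bar>) ` {1..N}))"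
  have dpos: "d > 0" unfolding d_def using x N2 by (auto simp: Min_gr_iff)
  have "0 < s \<and> KK s = KK x" if s: "dist s x < d" for s
  proof -
    have "\<bar>s - x\<bar> < d" using s by (simp add: dist_real_def)
    then have sx: "\<bar>s - x\<bar> < x" "\<And>l. l \<in> {1..N} \<Longrightarrow> \<bar>s - x\<bar> < \<bar>x - tsw N x0 l\<bar>"
      unfolding d_def by auto
    have "{l\<in>{1..N}. tsw N x0 l \<le> s} = {l\<in>{1..N}. tsw N x0 l \<le> x}"
    proof (intro Collect_cong conj_cong refl)
      fix l assume "l \<in> {1..N}"
      from sx(2)[OF this] show "(tsw N x0 l \<le> s) = (tsw N x0 l \<le> x)" by auto
    qed
    then show ?thesis using sx(1) unfolding KK_def by auto
  qed
  then show ?thesis using dpos by blast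
qed

lemma GG_deriv: assumes "k \<ge> 1" "k \<le> N"
  shows "(GG k has_real_derivative (- GG k x + (1 - 1 / real k) * MM N x0 x)) (at x)"
proof -
  have f: "GG k = (\<lambda>t. (real N * MM N x0 t - (\<Sum>j=k+1..N. CC N x0 j t)) / real k)"
    by (rule ext) (simp add: GG_def)
  have d: "((\<lambda>t. (real N * MM N x0 t - (\<Sum>j=k+1..N. CC N x0 j t)) / real k) has_real_derivative
     (real N * (- MM N x0 x / real N) - (\<Sum>j=k+1..N. - CC N x0 j x + MM N x0 x)) / real k) (at x)"
  proof -
    have ds: "((\<lambda>t. \<Sum>j=k+1..N. CC N x0 j t) has_real_derivative (\<Sum>j=k+1..N. - CC N x0 j x + MM N x0 x)) (at x)"
      by (rule DERIV_sum) (rule CC_deriv[OF N2])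
    have dm: "(MM N x0 has_real_derivative (- MM N x0 x / real N)) (at x)" by (rule MM_deriv) (use N2 in auto)
    show ?thesis by (intro DERIV_cdivide DERIV_diff DERIV_cmult dm ds)
  qed
  have c: "card {k+1..N} = N - k" by simp
  have e: "(real N * (- MM N x0 x / real N) - (\<Sum>j=k+1..N. - CC N x0 j x + MM N x0 x)) / real k
      = - GG k x + (1 - 1 / real k) * MM N x0 x"
  proof -
    have sm: "(\<Sum>j=k+1..N. - CC N x0 j x + MM N x0 x) = (real N - real k) * MM N x0 x - (\<Sum>j=k+1..N. CC N x0 j x)"
      using assms by (simp add: sum_subtractf c of_nat_diff)
    show ?thesis unfolding sm GG_def using N2 assms by (simp add: field_simps)
  qed
  show ?thesis using d unfolding e f[symmetric] .
qed

end



context gsetup begin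

lemma greedy_KK: "greedy N x0 t i = (if 1 \<le> i \<and> i \<le> KK t then 1 / real (KK t) else 0)"
  unfolding greedy_def KK_def by (simp add: Let_def)

lemma XI_deriv: assumes x: "0 < x" "x \<notin> tsw N x0 ` {1..N}" and i: "i \<in> {1..N}"
  shows "((\<lambda>s. XI s i) has_real_derivative (- XI x i + (1 - greedy N x0 x i) * pmean N (XI x))) (at x)"
proof -
  obtain d where d: "d > 0" "\<And>s. dist s x < d \<Longrightarrow> 0 < s \<and> KK s = KK x" using KK_local[OF x] by blast
  define k where "k = KK x"
  have k: "k \<in> {1..N}" using KK_props(1)[of x] x unfolding k_def by auto
  define F where "F = (if i \<le> k then GG k else CC N x0 i)"
  have loc: "F s = XI s i" if "s \<in> ball x d" for s
  proof -
    have "0 < s" "KK s = k" using d(2)[of s] that unfolding k_def by (auto simp: dist_commute)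
    then show ?thesis unfolding F_def using XI_eq[of s i] i by auto
  qed
  have mean: "pmean N (XI x) = MM N x0 x" using XI_mean x by auto
  have gr: "greedy N x0 x i = (if i \<le> k then 1 / real k else 0)" using i unfolding greedy_KK k_def by auto
  have xi: "XI x i = F x" using loc[of x] d by auto
  have dF: "(F has_real_derivative (- F x + (1 - greedy N x0 x i) * MM N x0 x)) (at x)"
  proof (cases "i \<le> k")
    case True
    then show ?thesis unfolding F_def gr using GG_deriv[of k x] k by simp
  next
    case False
    then show ?thesis unfolding F_def gr using CC_deriv[OF N2, of x0 i x] by simp
  qed
  show ?thesis unfolding mean xi
    by (rule has_field_derivative_transform_within_open[OF dF, of "ball x d"]) (use d loc in auto)
qed

lemma greedy_solves: "solves N T (greedy N x0) XI"
  unfolding solves_def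
proof (intro ballI)
  fix t i assume t: "t \<in> {0..T}" and i: "i \<in> {1..N}"
  have "((\<lambda>s. - XI s i + (1 - greedy N x0 s i) * pmean N (XI s)) has_integral ((\<lambda>s. XI s i) t - (\<lambda>s. XI s i) 0)) {0..t}"
  proof (rule fundamental_theorem_of_calculus_strong[where S="tsw N x0 ` {1..N}"])
    show "finite (tsw N x0 ` {1..N})" by simp
    show "0 \<le> t" using t by simp
    show "continuous_on {0..t} (\<lambda>s. XI s i)" by (rule XI_cont)
    fix x assume x: "x \<in> {0..t} - tsw N x0 ` {1..N}"
    have "tsw N x0 1 = 0" by (simp add: tsw_def)
    moreover have "(1::nat) \<in> {1..N}" using N2 by simp
    ultimately have "0 \<in> tsw N x0 ` {1..N}" by (metis image_eqI)
    then have "0 < x" using x by (cases "x = 0") auto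
    moreover have "x \<notin> tsw N x0 ` {1..N}" using x by blast
    ultimately have "((\<lambda>s. XI s i) has_real_derivative (- XI x i + (1 - greedy N x0 x i) * pmean N (XI x))) (at x)"
      by (rule XI_deriv[OF _ _ i])
    then show "((\<lambda>s. XI s i) has_vector_derivative (- XI x i + (1 - greedy N x0 x i) * pmean N (XI x))) (at x)"
      by (simp add: has_real_derivative_iff_has_vector_derivative)
  qed
  then show "((\<lambda>s. - XI s i + (1 - greedy N x0 s i) * pmean N (XI s)) has_integral (XI t i - XI 0 i)) {0..t}" by (simp only:)
qed

lemma greedy_fs: "full_strength N T (greedy N x0)"
  unfolding full_strength_def
proof (intro conjI)
  show "\<forall>i\<in>{1..N}. (\<lambda>t. greedy N x0 t i) \<in> borel_measurable (restrict_space lborel {0..T})"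
  proof
    fix i assume i: "i \<in> {1..N}"
    have pm: "Measurable.pred (restrict_space lborel {0..T}) (\<lambda>t. l \<in> {1..N} \<and> tsw N x0 l \<le> t)" for l
      by (intro measurable_restrict_space1) measurable
    have KKm: "(\<lambda>t. Max {l. l \<in> {1..N} \<and> tsw N x0 l \<le> t}) \<in> measurable (restrict_space lborel {0..T}) (count_space UNIV)"
      by (rule measurable_Max_nat) (rule pm)
    have hm: "(\<lambda>k. if 1 \<le> i \<and> i \<le> k then 1 / real k else 0 :: real) \<in> measurable (count_space UNIV) borel"
      by simp
    have "(\<lambda>t. (\<lambda>k. if 1 \<le> i \<and> i \<le> k then 1 / real k else 0 :: real) (Max {l. l \<in> {1..N} \<and> tsw N x0 l \<le> t}))
       \<in> borel_measurable (restrict_space lborel {0..T})"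
      by (rule measurable_compose[OF KKm hm])
    then show "(\<lambda>t. greedy N x0 t i) \<in> borel_measurable (restrict_space lborel {0..T})"
      unfolding greedy_def Let_def .
  qed
  show "\<forall>t\<in>{0..T}. (\<forall>i\<in>{1..N}. 0 \<le> greedy N x0 t i \<and> greedy N x0 t i \<le> 1) \<and> (\<Sum>i=1..N. greedy N x0 t i) = 1"
  proof
    fix t assume t: "t \<in> {0..T}"
    define k where "k = KK t"
    have k: "k \<in> {1..N}" using KK_props(1)[of t] t unfolding k_def by auto
    have A: "\<forall>i\<in>{1..N}. 0 \<le> greedy N x0 t i \<and> greedy N x0 t i \<le> 1"
      unfolding greedy_KK k_def[symmetric] using k by auto
    have "(\<Sum>i=1..N. greedy N x0 t i) = (\<Sum>i=1..k. greedy N x0 t i) + (\<Sum>i=k+1..N. greedy N x0 t i)"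
      using sum_split_l[of k N] k by auto
    also have "(\<Sum>i=1..k. greedy N x0 t i) = (\<Sum>i=1..k. 1 / real k)"
      by (rule sum.cong) (auto simp: greedy_KK k_def)
    also have "(\<Sum>i=k+1..N. greedy N x0 t i) = 0"
      by (rule sum.neutral) (auto simp: greedy_KK k_def)
    finally have "(\<Sum>i=1..N. greedy N x0 t i) = 1" using k by simp
    then show "(\<forall>i\<in>{1..N}. 0 \<le> greedy N x0 t i \<and> greedy N x0 t i \<le> 1) \<and> (\<Sum>i=1..N. greedy N x0 t i) = 1"
      using A by blast
  qed
qed

lemma greedy_opt: assumes T: "0 \<le> T" shows "optimal N T x0 (greedy N x0) XI"
proof (rule opt_lemma[OF N2 _ T greedy_fs greedy_solves, where l="KK T" and lam="GG (KK T) T"])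
  show "0 \<le> pmean N x0" using m0 by simp
  show "\<forall>i\<in>{1..N}. XI 0 i = x0 i" using XI_0 by auto
  show "\<forall>i\<in>{1..N}. i \<le> KK T \<longrightarrow> XI T i = GG (KK T) T" using XI_eq[OF T] by auto
  show "\<forall>i\<in>{1..N}. KK T < i \<longrightarrow> XI T i = CC N x0 i T \<and> CC N x0 i T \<le> GG (KK T) T"
    using XI_eq[OF T] W2[OF T] by auto
qed

end



theorem theorem5:
  fixes N :: nat and T :: real and \<xi>0 :: "nat \<Rightarrow> real"
  assumes "N \<ge> 2" and "T > 0" and "pmean N \<xi>0 > 0"
    and "\<forall>i j. 1 \<le> i \<and> i \<le> j \<and> j \<le> N \<longrightarrow> \<xi>0 j \<le> \<xi>0 i"
  shows
   "(\<forall>l\<in>{1..N-1}. tsw N \<xi>0 l \<le> T \<and> T < tsw N \<xi>0 (l+1) \<longrightarrow>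
      (\<forall>\<alpha> \<xi>. full_strength N T \<alpha> \<and> solves N T \<alpha> \<xi> \<and> (\<forall>i\<in>{1..N}. \<xi> 0 i = \<xi>0 i)
         \<and> (\<forall>i\<in>{1..l}. \<xi> T i = pmean l (\<xi> T))
         \<and> (\<forall>t\<in>{0..T}. (\<Sum>i=1..l. \<alpha> t i) = 1 \<and> (\<forall>i\<in>{l+1..N}. \<alpha> t i = 0))
         \<longrightarrow> optimal N T \<xi>0 \<alpha> \<xi>))
    \<and> (tsw N \<xi>0 N \<le> T \<longrightarrow>
      (\<forall>\<alpha> \<xi>. full_strength N T \<alpha> \<and> solves N T \<alpha> \<xi> \<and> (\<forall>i\<in>{1..N}. \<xi> 0 i = \<xi>0 i)
         \<and> (\<forall>i\<in>{1..N}. \<xi> T i = pmean N (\<xi> T))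
         \<longrightarrow> optimal N T \<xi>0 \<alpha> \<xi>))
    \<and> (\<exists>\<xi>. optimal N T \<xi>0 (greedy N \<xi>0) \<xi>)"
proof -
  note N2 = assms(1) and m0 = assms(3)
  interpret g: gsetup N \<xi>0 using assms by unfold_locales auto
  have T0: "0 \<le> T" and TT: "T \<in> {0..T}" using assms(2) by auto
  have m0': "0 \<le> pmean N \<xi>0" using m0 by simp
  have P1: "\<forall>l\<in>{1..N-1}. tsw N \<xi>0 l \<le> T \<and> T < tsw N \<xi>0 (l+1) \<longrightarrow>
      (\<forall>\<alpha> \<xi>. full_strength N T \<alpha> \<and> solves N T \<alpha> \<xi> \<and> (\<forall>i\<in>{1..N}. \<xi> 0 i = \<xi>0 i)
         \<and> (\<forall>i\<in>{1..l}. \<xi> T i = pmean l (\<xi> T))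
         \<and> (\<forall>t\<in>{0..T}. (\<Sum>i=1..l. \<alpha> t i) = 1 \<and> (\<forall>i\<in>{l+1..N}. \<alpha> t i = 0))
         \<longrightarrow> optimal N T \<xi>0 \<alpha> \<xi>)"
  proof (intro ballI impI allI)
    fix l \<alpha> \<xi>
    assume l: "l \<in> {1..N-1}" and tt: "tsw N \<xi>0 l \<le> T \<and> T < tsw N \<xi>0 (l+1)"
      and H: "full_strength N T \<alpha> \<and> solves N T \<alpha> \<xi> \<and> (\<forall>i\<in>{1..N}. \<xi> 0 i = \<xi>0 i)
         \<and> (\<forall>i\<in>{1..l}. \<xi> T i = pmean l (\<xi> T))
         \<and> (\<forall>t\<in>{0..T}. (\<Sum>i=1..l. \<alpha> t i) = 1 \<and> (\<forall>i\<in>{l+1..N}. \<alpha> t i = 0))"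
    from H have fs: "full_strength N T \<alpha>" and so: "solves N T \<alpha> \<xi>" and i0: "\<forall>i\<in>{1..N}. \<xi> 0 i = \<xi>0 i"
      and eqT: "\<forall>i\<in>{1..l}. \<xi> T i = pmean l (\<xi> T)"
      and az: "\<forall>t\<in>{0..T}. \<forall>i\<in>{l+1..N}. \<alpha> t i = 0" by auto
    have lN: "l < N" "1 \<le> l" using l N2 by auto
    define lam where "lam = pmean l (\<xi> T)"
    have zero: "\<xi> T i = CC N \<xi>0 i T" if i: "i \<in> {l+1..N}" for i
    proof -
      have "i \<in> {1..N}" using i lN by auto
      moreover have "\<forall>t\<in>{0..T}. \<alpha> t i = 0" using az i by auto
      ultimately show ?thesis using sol_comp(2)[OF N2 fs so i0 m0'] TT by blast
    qed
    have tot: "(\<Sum>i=1..N. \<xi> T i) = real N * MM N \<xi>0 T"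
    proof -
      have "pmean N (\<xi> T) = MM N \<xi>0 T" using sol_mean[OF N2 fs so i0] TT by blast
      then show ?thesis using N2 unfolding pmean_def by (simp add: divide_eq_eq mult.commute)
    qed
    have s2: "(\<Sum>i=l+1..N. \<xi> T i) = (\<Sum>i=l+1..N. CC N \<xi>0 i T)"
      by (rule sum.cong) (use zero in auto)
    have s1: "real l * lam = (\<Sum>i=1..l. \<xi> T i)" unfolding lam_def pmean_def using lN by simp
    have lamq: "real l * lam = real N * MM N \<xi>0 T - (\<Sum>i=l+1..N. CC N \<xi>0 i T)"
      using sum_split_l[of l N "\<lambda>i. \<xi> T i"] lN tot s1 s2 by simp
    have "T \<le> tsw N \<xi>0 (l+1)" using tt by simp
    from Phi_le[OF N2 lN(1) m0 g.DD_nonneg[OF lN(1)] this]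
    have "real l * CC N \<xi>0 (l+1) T \<le> real l * lam" using lamq by simp
    then have c1: "CC N \<xi>0 (l+1) T \<le> lam" using lN by simp
    show "optimal N T \<xi>0 \<alpha> \<xi>"
    proof (rule opt_lemma[OF N2 m0' T0 fs so i0, where l=l and lam=lam])
      show "\<forall>i\<in>{1..N}. i \<le> l \<longrightarrow> \<xi> T i = lam" using eqT unfolding lam_def by auto
      show "\<forall>i\<in>{1..N}. l < i \<longrightarrow> \<xi> T i = CC N \<xi>0 i T \<and> CC N \<xi>0 i T \<le> lam"
      proof (intro ballI impI conjI)
        fix i assume i: "i \<in> {1..N}" "l < i"
        then show "\<xi> T i = CC N \<xi>0 i T" using zero by auto
        have "CC N \<xi>0 i T \<le> CC N \<xi>0 (l+1) T" using g.CC_mono[of "l+1" i T] i by auto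
        then show "CC N \<xi>0 i T \<le> lam" using c1 by simp
      qed
    qed
  qed
  have P2: "tsw N \<xi>0 N \<le> T \<longrightarrow>
      (\<forall>\<alpha> \<xi>. full_strength N T \<alpha> \<and> solves N T \<alpha> \<xi> \<and> (\<forall>i\<in>{1..N}. \<xi> 0 i = \<xi>0 i)
         \<and> (\<forall>i\<in>{1..N}. \<xi> T i = pmean N (\<xi> T))
         \<longrightarrow> optimal N T \<xi>0 \<alpha> \<xi>)"
  proof (intro impI allI)
    fix \<alpha> \<xi>
    assume H: "full_strength N T \<alpha> \<and> solves N T \<alpha> \<xi> \<and> (\<forall>i\<in>{1..N}. \<xi> 0 i = \<xi>0 i)
         \<and> (\<forall>i\<in>{1..N}. \<xi> T i = pmean N (\<xi> T))"
    then have fs: "full_strength N T \<alpha>" and so: "solves N T \<alpha> \<xi>" and i0: "\<forall>i\<in>{1..N}. \<xi> 0 i = \<xi>0 i"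
      and eqT: "\<forall>i\<in>{1..N}. \<xi> T i = pmean N (\<xi> T)" by auto
    show "optimal N T \<xi>0 \<alpha> \<xi>"
      by (rule opt_lemma[OF N2 m0' T0 fs so i0, where l=N and lam="pmean N (\<xi> T)"]) (use eqT in auto)
  qed
  have P3: "\<exists>\<xi>. optimal N T \<xi>0 (greedy N \<xi>0) \<xi>"
    using g.greedy_opt[OF T0] by blast
  show ?thesis using P1 P2 P3 by blast
qed


end
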